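(* Let $\mathbb{C}$ be a small category and $N\mathbb{C}$ its nerve. Then $N\mathbb{C}$ is a Skvortsov–Shehtman complex if and only if it is a Kan complex.
   Context: A simplicial set $S$ is a Skvortsov–Shehtman complex if for all $n>1$, $0\le p<q\le n$, and any $(n-1)$-simplices $c_p,c_q$ of $S$ with $d_pc_q=d_{q-1}c_p$, there exists an $n$-simplex $x$ with $d_px=c_p$ and $d_qx=c_q$. *)

theory Defs
  imports Main
begin

text \<open>A small category: a set of objects, a set of arrows, domain, codomain,
identities and composition (Comp g f is g after f).\<close>

record ('o, 'm) category =
  Obj  :: "'o set"
  Arr  :: "'m set"
  Dom  :: "'m \<Rightarrow> 'o"
  Cod  :: "'m \<Rightarrow> 'o"
  Id   :: "'o \<Rightarrow> 'm"
  Comp :: "'m \<Rightarrow> 'm \<Rightarrow> 'm"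

definition is_category :: "('o, 'm) category \<Rightarrow> bool" where
  "is_category C \<longleftrightarrow>
     (\<forall>f\<in>Arr C. Dom C f \<in> Obj C \<and> Cod C f \<in> Obj C) \<and>
     (\<forall>a\<in>Obj C. Id C a \<in> Arr C \<and> Dom C (Id C a) = a \<and> Cod C (Id C a) = a) \<and>
     (\<forall>f\<in>Arr C. \<forall>g\<in>Arr C. Cod C f = Dom C g \<longrightarrow>
         Comp C g f \<in> Arr C \<and> Dom C (Comp C g f) = Dom C f \<and> Cod C (Comp C g f) = Cod C g) \<and>
     (\<forall>f\<in>Arr C. Comp C f (Id C (Dom C f)) = f \<and> Comp C (Id C (Cod C f)) f = f) \<and>
     (\<forall>f\<in>Arr C. \<forall>g\<in>Arr C. \<forall>h\<in>Arr C. Cod C f = Dom C g \<longrightarrow> Cod C g = Dom C h \<longrightarrow>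
         Comp C h (Comp C g f) = Comp C (Comp C h g) f)"

text \<open>A simplicial set is presented by its sets of n-simplices S n and its face
operators d i (acting on simplices of any dimension). The two properties below
only involve faces.\<close>

definition SS_complex :: "(nat \<Rightarrow> 'a set) \<Rightarrow> (nat \<Rightarrow> 'a \<Rightarrow> 'a) \<Rightarrow> bool" where
  "SS_complex S d \<longleftrightarrow>
     (\<forall>n p q. 1 < n \<and> p < q \<and> q \<le> n \<longrightarrow>
        (\<forall>cp\<in>S (n - 1). \<forall>cq\<in>S (n - 1). d p cq = d (q - 1) cp \<longrightarrow>
           (\<exists>x\<in>S n. d p x = cp \<and> d q x = cq)))"

definition Kan_complex :: "(nat \<Rightarrow> 'a set) \<Rightarrow> (nat \<Rightarrow> 'a \<Rightarrow> 'a) \<Rightarrow> bool" where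
  "Kan_complex S d \<longleftrightarrow>
     (\<forall>n k (y :: nat \<Rightarrow> 'a). 1 \<le> n \<and> k \<le> n \<and>
        (\<forall>i\<le>n. i \<noteq> k \<longrightarrow> y i \<in> S (n - 1)) \<and>
        (\<forall>i j. i < j \<and> j \<le> n \<and> i \<noteq> k \<and> j \<noteq> k \<longrightarrow> d i (y j) = d (j - 1) (y i))
        \<longrightarrow> (\<exists>x\<in>S n. \<forall>i\<le>n. i \<noteq> k \<longrightarrow> d i x = y i))"

text \<open>An n-simplex of the nerve is a string a0 -f1-> a1 -> ... -fn-> an,
represented as (a0, [f1, ..., fn]).\<close>

definition nerve_simplices :: "('o, 'm) category \<Rightarrow> nat \<Rightarrow> ('o \<times> 'm list) set" where
  "nerve_simplices C n =
     {(a, fs). a \<in> Obj C \<and> length fs = n \<and> set fs \<subseteq> Arr C \<and>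
        (\<forall>i<n. Dom C (fs ! i) = (if i = 0 then a else Cod C (fs ! (i - 1))))}"

definition nerve_face :: "('o, 'm) category \<Rightarrow> nat \<Rightarrow> ('o \<times> 'm list) \<Rightarrow> ('o \<times> 'm list)" where
  "nerve_face C i s = (case s of (a, fs) \<Rightarrow>
     if i = 0 then (if fs = [] then (a, []) else (Cod C (hd fs), tl fs))
     else if i = length fs then (a, butlast fs)
     else (a, take (i - 1) fs @ [Comp C (fs ! i) (fs ! (i - 1))] @ drop (i + 1) fs))"

end

theory Submission
  imports Defs
begin

locale cat =
  fixes C :: "('o, 'm) category"
  assumes cat: "is_category C"
begin

abbreviation "S \<equiv> nerve_simplices C"
abbreviation "d \<equiv> nerve_face C"

lemma arr_dom[simp]: "f \<in> Arr C \<Longrightarrow> Dom C f \<in> Obj C"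
  and arr_cod[simp]: "f \<in> Arr C \<Longrightarrow> Cod C f \<in> Obj C"
  and id_arr[simp]: "a \<in> Obj C \<Longrightarrow> Id C a \<in> Arr C"
  and id_dom[simp]: "a \<in> Obj C \<Longrightarrow> Dom C (Id C a) = a"
  and id_cod[simp]: "a \<in> Obj C \<Longrightarrow> Cod C (Id C a) = a"
  and comp_arr[simp]: "f \<in> Arr C \<Longrightarrow> g \<in> Arr C \<Longrightarrow> Cod C f = Dom C g \<Longrightarrow> Comp C g f \<in> Arr C"
  and comp_dom[simp]: "f \<in> Arr C \<Longrightarrow> g \<in> Arr C \<Longrightarrow> Cod C f = Dom C g \<Longrightarrow> Dom C (Comp C g f) = Dom C f"
  and comp_cod[simp]: "f \<in> Arr C \<Longrightarrow> g \<in> Arr C \<Longrightarrow> Cod C f = Dom C g \<Longrightarrow> Cod C (Comp C g f) = Cod C g"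
  and comp_idr[simp]: "f \<in> Arr C \<Longrightarrow> Comp C f (Id C (Dom C f)) = f"
  and comp_idl[simp]: "f \<in> Arr C \<Longrightarrow> Comp C (Id C (Cod C f)) f = f"
  and assoc: "f \<in> Arr C \<Longrightarrow> g \<in> Arr C \<Longrightarrow> h \<in> Arr C \<Longrightarrow> Cod C f = Dom C g \<Longrightarrow> Cod C g = Dom C h \<Longrightarrow>
         Comp C h (Comp C g f) = Comp C (Comp C h g) f"
  using cat unfolding is_category_def by blast+

lemma comp_idr'[simp]: "f \<in> Arr C \<Longrightarrow> a = Dom C f \<Longrightarrow> Comp C f (Id C a) = f"
  by simp
lemma comp_idl'[simp]: "f \<in> Arr C \<Longrightarrow> a = Cod C f \<Longrightarrow> Comp C (Id C a) f = f"
  by simp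

definition ob :: "'o \<times> 'm list \<Rightarrow> nat \<Rightarrow> 'o" where
  "ob x u = (if u = 0 then fst x else Cod C (snd x ! (u - 1)))"

fun path :: "'o \<times> 'm list \<Rightarrow> nat \<Rightarrow> nat \<Rightarrow> 'm" where
  "path x u 0 = Id C (ob x u)"
| "path x u (Suc k) = Comp C (snd x ! (u + k)) (path x u k)"

definition E :: "'o \<times> 'm list \<Rightarrow> nat \<Rightarrow> nat \<Rightarrow> 'm" where
  "E x u v = path x u (v - u)"

definition dl :: "nat \<Rightarrow> nat \<Rightarrow> nat" where
  "dl i u = (if u < i then u else Suc u)"

definition sg :: "nat \<Rightarrow> nat \<Rightarrow> nat" where
  "sg i v = (if v < i then v else v - 1)"

lemma S_iff: "(a, fs) \<in> S n \<longleftrightarrow> a \<in> Obj C \<and> length fs = n \<and>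
    (\<forall>j<n. fs ! j \<in> Arr C \<and> Dom C (fs ! j) = ob (a, fs) j)"
proof -
  have "set fs \<subseteq> Arr C \<longleftrightarrow> (\<forall>j<length fs. fs ! j \<in> Arr C)"
    by (simp add: subset_code(1) all_set_conv_all_nth)
  then show ?thesis unfolding nerve_simplices_def ob_def by auto
qed

lemma S_fst: "x \<in> S n \<Longrightarrow> fst x \<in> Obj C"
  and S_len: "x \<in> S n \<Longrightarrow> length (snd x) = n"
  using S_iff[of "fst x" "snd x" n] by auto

lemma S_spine: "x \<in> S n \<Longrightarrow> j < n \<Longrightarrow> snd x ! j \<in> Arr C \<and> Dom C (snd x ! j) = ob x j
   \<and> Cod C (snd x ! j) = ob x (Suc j)"
  using S_iff[of "fst x" "snd x" n] by (auto simp: ob_def)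

lemma ob_obj: "x \<in> S n \<Longrightarrow> u \<le> n \<Longrightarrow> ob x u \<in> Obj C"
proof (cases u)
  case 0 assume "x \<in> S n" then show ?thesis using S_fst 0 by (auto simp: ob_def) next
  case (Suc k)
  assume "x \<in> S n" "u \<le> n"
  then show ?thesis using S_spine[of x n k] Suc arr_cod[of "snd x ! k"] by simp
qed

lemma path_arr: "x \<in> S n \<Longrightarrow> u + k \<le> n \<Longrightarrow>
   path x u k \<in> Arr C \<and> Dom C (path x u k) = ob x u \<and> Cod C (path x u k) = ob x (u + k)"
proof (induction k)
  case 0 then show ?case using ob_obj by auto
next
  case (Suc k)
  then have "u + k < n" by auto
  with S_spine[OF Suc.prems(1) this] Suc show ?case by auto
qed

lemma E_arr: "x \<in> S n \<Longrightarrow> u \<le> v \<Longrightarrow> v \<le> n \<Longrightarrow>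
   E x u v \<in> Arr C \<and> Dom C (E x u v) = ob x u \<and> Cod C (E x u v) = ob x v"
  using path_arr[of x n u "v - u"] by (auto simp: E_def)

lemma E_refl: "E x u u = Id C (ob x u)"
  by (simp add: E_def)

lemma path_trans: "x \<in> S n \<Longrightarrow> u + k + l \<le> n \<Longrightarrow>
   path x u (k + l) = Comp C (path x (u + k) l) (path x u k)"
proof (induction l)
  case 0 then show ?case using path_arr[of x n u k] by auto
next
  case (Suc l)
  have s: "snd x ! (u + k + l) \<in> Arr C \<and> Dom C (snd x ! (u + k + l)) = ob x (u + k + l)"
    using S_spine[OF Suc.prems(1), of "u+k+l"] Suc.prems by auto
  have p1: "path x (u+k) l \<in> Arr C \<and> Dom C (path x (u+k) l) = ob x (u+k) \<and> Cod C (path x (u+k) l) = ob x (u+k+l)"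
    using path_arr[OF Suc.prems(1), of "u+k" l] Suc.prems by auto
  have p2: "path x u k \<in> Arr C \<and> Dom C (path x u k) = ob x u \<and> Cod C (path x u k) = ob x (u+k)"
    using path_arr[OF Suc.prems(1), of u k] Suc.prems by auto
  have "path x u (k + Suc l) = Comp C (snd x ! (u + k + l)) (Comp C (path x (u + k) l) (path x u k))"
    using Suc by (simp add: add.assoc)
  also have "\<dots> = Comp C (Comp C (snd x ! (u + k + l)) (path x (u + k) l)) (path x u k)"
    using s p1 p2 by (intro assoc) auto
  finally show ?case by (simp add: add.assoc)
qed

lemma E_trans: "x \<in> S n \<Longrightarrow> u \<le> v \<Longrightarrow> v \<le> w \<Longrightarrow> w \<le> n \<Longrightarrow>
   E x u w = Comp C (E x v w) (E x u v)"
  using path_trans[of x n u "v - u" "w - v"] by (simp add: E_def)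

lemma E_step: "x \<in> S n \<Longrightarrow> j < n \<Longrightarrow> E x j (Suc j) = snd x ! j"
  using S_spine[of x n j] by (simp add: E_def)

lemma S_ext: "y \<in> S m \<Longrightarrow> y' \<in> S m \<Longrightarrow> ob y 0 = ob y' 0 \<Longrightarrow>
   (\<And>j. j < m \<Longrightarrow> E y j (Suc j) = E y' j (Suc j)) \<Longrightarrow> y = y'"
proof -
  assume y: "y \<in> S m" and y': "y' \<in> S m" and o: "ob y 0 = ob y' 0"
    and e: "\<And>j. j < m \<Longrightarrow> E y j (Suc j) = E y' j (Suc j)"
  have "fst y = fst y'" using o by (simp add: ob_def)
  moreover have "snd y = snd y'"
  proof (rule nth_equalityI)
    show "length (snd y) = length (snd y')" using S_len[OF y] S_len[OF y'] by simp
    fix j assume "j < length (snd y)"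
    then have j: "j < m" using S_len[OF y] by simp
    show "snd y ! j = snd y' ! j" using E_step[OF y j] E_step[OF y' j] e[OF j] by simp
  qed
  ultimately show "y = y'" by (simp add: prod_eq_iff)
qed

lemma face_basic:
  assumes x: "x \<in> S n" and n: "1 \<le> n" and i: "i \<le> n"
  shows "fst (d i x) = ob x (dl i 0)"
    and "length (snd (d i x)) = n - 1"
    and "\<And>j. j < n - 1 \<Longrightarrow> snd (d i x) ! j = E x (dl i j) (dl i (Suc j))"
proof -
  obtain a fs where xe: "x = (a, fs)" by (cases x)
  have len: "length fs = n" using S_len[OF x] xe by simp
  have ne: "fs \<noteq> []" using len n by auto
  have step: "\<And>j. j < n \<Longrightarrow> fs ! j = E x j (Suc j)" using E_step[OF x] xe by simp
  consider (z) "i = 0" | (t) "i = n" "i \<noteq> 0" | (m) "0 < i" "i < n" using i by linarith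
  then have "fst (d i x) = ob x (dl i 0) \<and> length (snd (d i x)) = n - 1 \<and>
     (\<forall>j < n - 1. snd (d i x) ! j = E x (dl i j) (dl i (Suc j)))"
  proof cases
    case z
    then have dx: "d i x = (Cod C (fs ! 0), tl fs)" using xe ne by (simp add: nerve_face_def hd_conv_nth)
    show ?thesis using dx z len step by (auto simp: ob_def dl_def xe nth_tl)
  next
    case t
    then have dx: "d i x = (a, butlast fs)" using xe len by (simp add: nerve_face_def)
    show ?thesis using dx t len step by (auto simp: ob_def dl_def xe nth_butlast)
  next
    case m
    then have dx: "d i x = (a, take (i - 1) fs @ [Comp C (fs ! i) (fs ! (i - 1))] @ drop (i + 1) fs)"
      using xe len by (simp add: nerve_face_def)
    have cmp: "Comp C (fs ! i) (fs ! (i - 1)) = E x (i - 1) (Suc i)"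
      using E_trans[OF x, of "i - 1" i "Suc i"] step[of i] step[of "i - 1"] m by simp
    show ?thesis
    proof (intro conjI allI impI)
      show "fst (d i x) = ob x (dl i 0)" using dx m xe by (simp add: ob_def dl_def)
      show "length (snd (d i x)) = n - 1" using dx m len by simp
      fix j assume j: "j < n - 1"
      consider "j < i - 1" | "j = i - 1" | "j > i - 1" by linarith
      then show "snd (d i x) ! j = E x (dl i j) (dl i (Suc j))"
      proof cases
        case 1 then have "Suc j < i" "j < n" using m by linarith+
        then show ?thesis using 1 dx m len step[of j] by (simp add: nth_append dl_def min_def)
      next
        case 2 then have "\<not> n \<le> i - 1" "\<not> Suc j < i" "j < i" using m by linarith+
        then show ?thesis using 2 dx m len cmp by (simp add: nth_append dl_def min_def)
      next
        case 3 then have "\<not> j < i" "\<not> n \<le> i - 1" "Suc j < n" "Suc i + (j - (i - 1) - 1) = Suc j" using m j by linarith+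
        then show ?thesis using 3 dx m len step[of "Suc j"] j by (auto simp add: nth_append dl_def min_def)
      qed
    qed
  qed
  then show "fst (d i x) = ob x (dl i 0)"
    and "length (snd (d i x)) = n - 1"
    and "\<And>j. j < n - 1 \<Longrightarrow> snd (d i x) ! j = E x (dl i j) (dl i (Suc j))" by auto
qed


lemma dl_mono: "a \<le> b \<Longrightarrow> dl i a \<le> dl i b" by (auto simp: dl_def)
lemma dl_le: "b \<le> n - 1 \<Longrightarrow> 1 \<le> n \<Longrightarrow> dl i b \<le> n" by (auto simp: dl_def)

lemma face_S:
  assumes x: "x \<in> S n" and n: "1 \<le> n" and i: "i \<le> n"
  shows "d i x \<in> S (n - 1)"
proof -
  note fb = face_basic[OF x n i]
  have sp: "\<And>j. j < n - 1 \<Longrightarrow> snd (d i x) ! j \<in> Arr C \<and> Dom C (snd (d i x) ! j) = ob x (dl i j)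
      \<and> Cod C (snd (d i x) ! j) = ob x (dl i (Suc j))"
    using fb(3) E_arr[OF x] dl_mono dl_le n by simp
  have "(fst (d i x), snd (d i x)) \<in> S (n - 1)"
    unfolding S_iff
  proof (intro conjI allI impI)
    show "fst (d i x) \<in> Obj C" using fb(1) ob_obj[OF x] dl_le[of 0 n i] n by simp
    show "length (snd (d i x)) = n - 1" by (rule fb(2))
    fix j assume j: "j < n - 1"
    show "snd (d i x) ! j \<in> Arr C" using sp[OF j] by simp
    show "Dom C (snd (d i x) ! j) = ob (fst (d i x), snd (d i x)) j"
    proof (cases j)
      case 0 then show ?thesis using sp[OF j] fb(1) by (simp add: ob_def)
    next
      case (Suc k) then show ?thesis using sp[OF j] sp[of k] j by (simp add: ob_def)
    qed
  qed
  then show ?thesis by simp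
qed

lemma face_ob:
  assumes x: "x \<in> S n" and n: "1 \<le> n" and i: "i \<le> n" and u: "u \<le> n - 1"
  shows "ob (d i x) u = ob x (dl i u)"
proof (cases u)
  case 0 then show ?thesis using face_basic(1)[OF x n i] by (simp add: ob_def)
next
  case (Suc k)
  then have "k < n - 1" using u by simp
  then show ?thesis using face_basic(3)[OF x n i, of k] E_arr[OF x, of "dl i k" "dl i (Suc k)"]
      dl_mono[of k "Suc k" i] dl_le[of "Suc k" n i] n u Suc by (simp add: ob_def)
qed

lemma face_E:
  assumes x: "x \<in> S n" and n: "1 \<le> n" and i: "i \<le> n" and uv: "u \<le> v" and v: "v \<le> n - 1"
  shows "E (d i x) u v = E x (dl i u) (dl i v)"
proof -
  have dS: "d i x \<in> S (n - 1)" by (rule face_S[OF x n i])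
  have "\<And>k. u + k \<le> n - 1 \<Longrightarrow> E (d i x) u (u + k) = E x (dl i u) (dl i (u + k))"
  proof -
    fix k show "u + k \<le> n - 1 \<Longrightarrow> E (d i x) u (u + k) = E x (dl i u) (dl i (u + k))"
    proof (induction k)
      case 0 then show ?case using face_ob[OF x n i, of u] by (simp add: E_refl)
    next
      case (Suc k)
      have "E (d i x) u (u + Suc k) = Comp C (E (d i x) (u + k) (u + Suc k)) (E (d i x) u (u + k))"
        using E_trans[OF dS, of u "u + k" "u + Suc k"] Suc.prems by simp
      also have "E (d i x) (u + k) (u + Suc k) = E x (dl i (u + k)) (dl i (u + Suc k))"
        using E_step[OF dS, of "u + k"] face_basic(3)[OF x n i, of "u + k"] Suc.prems by simp
      also have "E (d i x) u (u + k) = E x (dl i u) (dl i (u + k))" using Suc by simp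
      also have "Comp C (E x (dl i (u + k)) (dl i (u + Suc k))) (E x (dl i u) (dl i (u + k)))
          = E x (dl i u) (dl i (u + Suc k))"
        using E_trans[OF x, of "dl i u" "dl i (u + k)" "dl i (u + Suc k)"]
          dl_mono[of u "u + k" i] dl_mono[of "u + k" "u + Suc k" i] dl_le[of "u + Suc k" n i] n Suc.prems
        by simp
      finally show ?case .
    qed
  qed
  from this[of "v - u"] show ?thesis using uv v by simp
qed

lemma simp_id:
  assumes x: "x \<in> S n" and n: "2 \<le> n" and ij: "i < j" "j \<le> n"
  shows "d i (d j x) = d (j - 1) (d i x)"
proof -
  have a: "d j x \<in> S (n - 1)" using face_S[OF x] ij n by simp
  have b: "d i x \<in> S (n - 1)" using face_S[OF x] ij n by simp
  have ar: "\<And>t. dl j (dl i t) = dl i (dl (j - 1) t)" using ij by (auto simp: dl_def)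
  show ?thesis
  proof (rule S_ext)
    show "d i (d j x) \<in> S (n - 1 - 1)" using face_S[OF a] ij n by simp
    show "d (j - 1) (d i x) \<in> S (n - 1 - 1)" using face_S[OF b] ij n by simp
    show "ob (d i (d j x)) 0 = ob (d (j - 1) (d i x)) 0"
      using face_ob[OF a, of i 0] face_ob[OF b, of "j - 1" 0] face_ob[OF x, of j] face_ob[OF x, of i]
        ij n ar[of 0] dl_le[of 0 "n - 1"]
      by simp
    fix t assume t: "t < n - 1 - 1"
    have le1: "dl i t \<le> dl i (Suc t)" "dl i (Suc t) \<le> n - 1" "dl (j - 1) t \<le> dl (j - 1) (Suc t)"
        "dl (j - 1) (Suc t) \<le> n - 1"
      using t n ij by (auto simp: dl_def)
    show "E (d i (d j x)) t (Suc t) = E (d (j - 1) (d i x)) t (Suc t)"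
      using face_E[OF a, of i t "Suc t"] face_E[OF b, of "j - 1" t "Suc t"]
        face_E[OF x, of j "dl i t" "dl i (Suc t)"] face_E[OF x, of i "dl (j - 1) t" "dl (j - 1) (Suc t)"]
        le1 t n ij ar
      by simp
  qed
qed

lemma construct:
  assumes ob: "\<And>u. u \<le> n \<Longrightarrow> obf u \<in> Obj C"
    and ar: "\<And>u v. u \<le> n \<Longrightarrow> v \<le> n \<Longrightarrow> G u v \<in> Arr C \<and> Dom C (G u v) = obf u \<and> Cod C (G u v) = obf v"
    and rf: "\<And>u. u \<le> n \<Longrightarrow> G u u = Id C (obf u)"
    and tr: "\<And>u v w. u \<le> n \<Longrightarrow> v \<le> n \<Longrightarrow> w \<le> n \<Longrightarrow> Comp C (G v w) (G u v) = G u w"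
  shows "(obf 0, map (\<lambda>j. G j (Suc j)) [0..<n]) \<in> S n"
    and "\<And>u v. u \<le> v \<Longrightarrow> v \<le> n \<Longrightarrow> E (obf 0, map (\<lambda>j. G j (Suc j)) [0..<n]) u v = G u v"
proof -
  let ?x = "(obf 0, map (\<lambda>j. G j (Suc j)) [0..<n])" 
  have obx: "\<And>u. u \<le> n \<Longrightarrow> ob ?x u = obf u"
    using ar by (auto simp: ob_def)
  show xS: "?x \<in> S n"
    unfolding S_iff using ob ar by (auto simp: ob_def)
  have key: "\<And>u k. u + k \<le> n \<Longrightarrow> E ?x u (u + k) = G u (u + k)"
  proof -
    fix u k show "u + k \<le> n \<Longrightarrow> E ?x u (u + k) = G u (u + k)"
    proof (induction k)
      case 0 then show ?case using obx rf by (simp add: E_refl)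
    next
      case (Suc k)
      have "E ?x u (u + Suc k) = Comp C (E ?x (u + k) (u + Suc k)) (E ?x u (u + k))"
        using E_trans[OF xS, of u "u + k" "u + Suc k"] Suc.prems by simp
      also have "\<dots> = Comp C (G (u + k) (u + Suc k)) (G u (u + k))"
        using E_step[OF xS, of "u + k"] Suc by simp
      finally show ?case using tr Suc.prems by simp
    qed
  qed
  show "\<And>u v. u \<le> v \<Longrightarrow> v \<le> n \<Longrightarrow> E ?x u v = G u v"
  proof -
    fix u v assume "u \<le> v" "v \<le> n"
    then show "E ?x u v = G u v" using key[of u "v - u"] by simp
  qed
qed

lemma S1_mem: "f \<in> Arr C \<Longrightarrow> (Dom C f, [f]) \<in> S 1"
  unfolding S_iff by (simp add: ob_def)

lemma S0: "y \<in> S 0 \<Longrightarrow> y = (fst y, []) \<and> fst y \<in> Obj C"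
  using S_len[of y 0] S_fst[of y 0] by (cases y) auto

lemma kan1:
  assumes k: "k \<le> 1" and yS: "\<forall>i\<le>1. i \<noteq> k \<longrightarrow> y i \<in> S (1 - 1)"
  shows "\<exists>x\<in>S 1. \<forall>i\<le>1. i \<noteq> k \<longrightarrow> d i x = y i"
proof (cases "k = 0")
  case True
  then have "y 1 \<in> S 0" using yS by simp
  then have y: "y 1 = (fst (y 1), [])" "fst (y 1) \<in> Obj C" using S0 by blast+
  let ?x = "(fst (y 1), [Id C (fst (y 1))])"
  have "?x \<in> S 1" using S1_mem[of "Id C (fst (y 1))"] y by simp
  moreover have "d 1 ?x = y 1" using y by (simp add: nerve_face_def)
  ultimately show ?thesis using True by (intro bexI[of _ ?x]) (auto simp: le_Suc_eq)
next
  case False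
  then have k1: "k = 1" using k by simp
  then have "y 0 \<in> S 0" using yS by simp
  then have y: "y 0 = (fst (y 0), [])" "fst (y 0) \<in> Obj C" using S0 by blast+
  let ?x = "(fst (y 0), [Id C (fst (y 0))])"
  have "?x \<in> S 1" using S1_mem[of "Id C (fst (y 0))"] y by simp
  moreover have "d 0 ?x = y 0" using y by (simp add: nerve_face_def)
  ultimately show ?thesis using k1 by (intro bexI[of _ ?x]) (auto simp: le_Suc_eq)
qed

lemma S2: "x \<in> S 2 \<Longrightarrow> \<exists>a g f. x = (a, [g, f]) \<and> a \<in> Obj C \<and> g \<in> Arr C \<and> f \<in> Arr C
   \<and> Dom C g = a \<and> Dom C f = Cod C g"
proof -
  assume x: "x \<in> S 2"
  obtain a fs where xe: "x = (a, fs)" by (cases x)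
  have "length fs = 2" using S_len[OF x] xe by simp
  then obtain g f where fs: "fs = [g, f]"
    by (metis (no_types, lifting) One_nat_def Suc_length_conv length_0_conv numeral_2_eq_2)
  show ?thesis using x unfolding xe fs S_iff by (auto simp: ob_def less_2_cases_iff)
qed

lemma grp_of:
  assumes r: "\<And>f. f \<in> Arr C \<Longrightarrow> \<exists>g\<in>Arr C. Dom C g = Cod C f \<and> Cod C g = Dom C f \<and> Comp C f g = Id C (Cod C f)"
    and l: "\<And>f. f \<in> Arr C \<Longrightarrow> \<exists>h\<in>Arr C. Dom C h = Cod C f \<and> Comp C h f = Id C (Dom C f)"
  shows "\<forall>f\<in>Arr C. \<exists>g\<in>Arr C. Dom C g = Cod C f \<and> Cod C g = Dom C f \<and>
     Comp C g f = Id C (Dom C f) \<and> Comp C f g = Id C (Cod C f)"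
proof
  fix f assume f: "f \<in> Arr C"
  obtain g where g: "g \<in> Arr C" "Dom C g = Cod C f" "Cod C g = Dom C f" "Comp C f g = Id C (Cod C f)"
    using r[OF f] by blast
  obtain h where h: "h \<in> Arr C" "Dom C h = Cod C f" "Comp C h f = Id C (Dom C f)"
    using l[OF f] by blast
  have "h = Comp C h (Id C (Cod C f))" using h by simp
  also have "\<dots> = Comp C h (Comp C f g)" using g by simp
  also have "\<dots> = Comp C (Comp C h f) g" using f g h by (intro assoc) auto
  also have "\<dots> = g" using h g by simp
  finally have "h = g" .
  then show "\<exists>g\<in>Arr C. Dom C g = Cod C f \<and> Cod C g = Dom C f \<and>
     Comp C g f = Id C (Dom C f) \<and> Comp C f g = Id C (Cod C f)" using g h by blast
qed

lemma SS_grp: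
  assumes ss: "SS_complex S d"
  shows "\<forall>f\<in>Arr C. \<exists>g\<in>Arr C. Dom C g = Cod C f \<and> Cod C g = Dom C f \<and>
     Comp C g f = Id C (Dom C f) \<and> Comp C f g = Id C (Cod C f)"
proof (rule grp_of)
  fix f assume f: "f \<in> Arr C"
  let ?b = "Cod C f"
  have c1: "(Dom C f, [f]) \<in> S (2 - 1)" "(?b, [Id C ?b]) \<in> S (2 - 1)"
    using S1_mem[OF f] S1_mem[of "Id C ?b"] f by auto
  have "d 0 (?b, [Id C ?b]) = d (1 - 1) (Dom C f, [f])" using f by (simp add: nerve_face_def)
  then obtain x where x: "x \<in> S 2" "d 0 x = (Dom C f, [f])" "d 1 x = (?b, [Id C ?b])"
    using ss c1 unfolding SS_complex_def by (metis less_numeral_extra(1) one_less_numeral_iff semiring_norm(76) order_refl one_le_numeral)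
  obtain a g f' where e: "x = (a, [g, f'])" "a \<in> Obj C" "g \<in> Arr C" "f' \<in> Arr C" "Dom C g = a" "Dom C f' = Cod C g"
    using S2[OF x(1)] by blast
  show "\<exists>g\<in>Arr C. Dom C g = Cod C f \<and> Cod C g = Dom C f \<and> Comp C f g = Id C (Cod C f)"
    using x(2,3) e by (intro bexI[of _ g]) (auto simp: nerve_face_def)
next
  fix f assume f: "f \<in> Arr C"
  let ?a = "Dom C f"
  have c1: "(?a, [Id C ?a]) \<in> S (2 - 1)" "(Dom C f, [f]) \<in> S (2 - 1)"
    using S1_mem[OF f] S1_mem[of "Id C ?a"] f by auto
  have "d 1 (Dom C f, [f]) = d (2 - 1) (?a, [Id C ?a])" using f by (simp add: nerve_face_def)
  then obtain x where x: "x \<in> S 2" "d 1 x = (?a, [Id C ?a])" "d 2 x = (Dom C f, [f])"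
    using ss c1 unfolding SS_complex_def by (metis one_less_numeral_iff semiring_norm(76) order_refl)
  obtain a g f' where e: "x = (a, [g, f'])" "a \<in> Obj C" "g \<in> Arr C" "f' \<in> Arr C" "Dom C g = a" "Dom C f' = Cod C g"
    using S2[OF x(1)] by blast
  show "\<exists>h\<in>Arr C. Dom C h = Cod C f \<and> Comp C h f = Id C (Dom C f)"
    using x(2,3) e by (intro bexI[of _ f']) (auto simp: nerve_face_def)
qed

lemma Kan_grp:
  assumes kan: "Kan_complex S d"
  shows "\<forall>f\<in>Arr C. \<exists>g\<in>Arr C. Dom C g = Cod C f \<and> Cod C g = Dom C f \<and>
     Comp C g f = Id C (Dom C f) \<and> Comp C f g = Id C (Cod C f)"
proof (rule grp_of)
  fix f assume f: "f \<in> Arr C"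
  let ?b = "Cod C f"
  define y where "y i = (if i = 0 then (Dom C f, [f]) else (?b, [Id C ?b]))" for i :: nat
  have yS: "\<forall>i\<le>2. i \<noteq> 2 \<longrightarrow> y i \<in> S (2 - 1)"
    using S1_mem[OF f] S1_mem[of "Id C ?b"] f by (auto simp: y_def)
  have cm: "\<forall>i j. i < j \<and> j \<le> 2 \<and> i \<noteq> 2 \<and> j \<noteq> 2 \<longrightarrow> d i (y j) = d (j - 1) (y i)"
  proof (intro allI impI)
    fix i j :: nat assume "i < j \<and> j \<le> 2 \<and> i \<noteq> 2 \<and> j \<noteq> 2"
    then have "i = 0" "j = 1" by auto
    then show "d i (y j) = d (j - 1) (y i)" using f by (simp add: y_def nerve_face_def)
  qed
  obtain x where x: "x \<in> S 2" "\<forall>i\<le>2. i \<noteq> 2 \<longrightarrow> d i x = y i"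
    using kan yS cm unfolding Kan_complex_def by (metis one_le_numeral order_refl)
  have x2: "d 0 x = (Dom C f, [f])" "d 1 x = (?b, [Id C ?b])" using x(2) by (auto simp: y_def)
  obtain a g f' where e: "x = (a, [g, f'])" "a \<in> Obj C" "g \<in> Arr C" "f' \<in> Arr C" "Dom C g = a" "Dom C f' = Cod C g"
    using S2[OF x(1)] by blast
  show "\<exists>g\<in>Arr C. Dom C g = Cod C f \<and> Cod C g = Dom C f \<and> Comp C f g = Id C (Cod C f)"
    using x2 e by (intro bexI[of _ g]) (auto simp: nerve_face_def)
next
  fix f assume f: "f \<in> Arr C"
  let ?a = "Dom C f"
  define y where "y i = (if i = 1 then (?a, [Id C ?a]) else (Dom C f, [f]))" for i :: nat
  have yS: "\<forall>i\<le>2. i \<noteq> 0 \<longrightarrow> y i \<in> S (2 - 1)"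
    using S1_mem[OF f] S1_mem[of "Id C ?a"] f by (auto simp: y_def)
  have cm: "\<forall>i j. i < j \<and> j \<le> 2 \<and> i \<noteq> 0 \<and> j \<noteq> 0 \<longrightarrow> d i (y j) = d (j - 1) (y i)"
  proof (intro allI impI)
    fix i j :: nat assume "i < j \<and> j \<le> 2 \<and> i \<noteq> 0 \<and> j \<noteq> 0"
    then have "i = 1" "j = 2" by auto
    then show "d i (y j) = d (j - 1) (y i)" using f by (simp add: y_def nerve_face_def)
  qed
  obtain x where x: "x \<in> S 2" "\<forall>i\<le>2. i \<noteq> 0 \<longrightarrow> d i x = y i"
    using kan yS cm unfolding Kan_complex_def by (metis one_le_numeral zero_le)
  have x2: "d 1 x = (?a, [Id C ?a])" "d 2 x = (Dom C f, [f])" using x(2) by (auto simp: y_def)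
  obtain a g f' where e: "x = (a, [g, f'])" "a \<in> Obj C" "g \<in> Arr C" "f' \<in> Arr C" "Dom C g = a" "Dom C f' = Cod C g"
    using S2[OF x(1)] by blast
  show "\<exists>h\<in>Arr C. Dom C h = Cod C f \<and> Comp C h f = Id C (Dom C f)"
    using x2 e by (intro bexI[of _ f']) (auto simp: nerve_face_def)
qed

end

locale grpd = cat +
  assumes grp: "\<forall>f\<in>Arr C. \<exists>g\<in>Arr C. Dom C g = Cod C f \<and> Cod C g = Dom C f \<and>
     Comp C g f = Id C (Dom C f) \<and> Comp C f g = Id C (Cod C f)"
begin

definition inv where
  "inv f = (SOME g. g \<in> Arr C \<and> Dom C g = Cod C f \<and> Cod C g = Dom C f \<and>
     Comp C g f = Id C (Dom C f) \<and> Comp C f g = Id C (Cod C f))"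

lemma inv_props: "f \<in> Arr C \<Longrightarrow> inv f \<in> Arr C \<and> Dom C (inv f) = Cod C f \<and> Cod C (inv f) = Dom C f \<and>
     Comp C (inv f) f = Id C (Dom C f) \<and> Comp C f (inv f) = Id C (Cod C f)"
proof -
  assume f: "f \<in> Arr C"
  then obtain g where "g \<in> Arr C \<and> Dom C g = Cod C f \<and> Cod C g = Dom C f \<and>
     Comp C g f = Id C (Dom C f) \<and> Comp C f g = Id C (Cod C f)" using grp by blast
  then show ?thesis unfolding inv_def by (rule someI)
qed

lemma inv_arr[simp]: "f \<in> Arr C \<Longrightarrow> inv f \<in> Arr C"
  and inv_dom[simp]: "f \<in> Arr C \<Longrightarrow> Dom C (inv f) = Cod C f"
  and inv_cod[simp]: "f \<in> Arr C \<Longrightarrow> Cod C (inv f) = Dom C f"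
  and inv_l[simp]: "f \<in> Arr C \<Longrightarrow> Comp C (inv f) f = Id C (Dom C f)"
  and inv_r[simp]: "f \<in> Arr C \<Longrightarrow> Comp C f (inv f) = Id C (Cod C f)"
  using inv_props by auto

lemma H1: "f \<in> Arr C \<Longrightarrow> g \<in> Arr C \<Longrightarrow> Cod C f = Dom C g \<Longrightarrow> Comp C (inv g) (Comp C g f) = f"
proof -
  assume a: "f \<in> Arr C" "g \<in> Arr C" "Cod C f = Dom C g"
  have "Comp C (inv g) (Comp C g f) = Comp C (Comp C (inv g) g) f"
    using a by (intro assoc) auto
  also have "\<dots> = Comp C (Id C (Cod C f)) f" using a by (simp only: inv_l)
  also have "\<dots> = f" using a by (intro comp_idl') auto
  finally show ?thesis .
qed
lemma H2: "f \<in> Arr C \<Longrightarrow> g \<in> Arr C \<Longrightarrow> Cod C f = Dom C g \<Longrightarrow> Comp C (Comp C g f) (inv f) = g"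
proof -
  assume a: "f \<in> Arr C" "g \<in> Arr C" "Cod C f = Dom C g"
  have "Comp C (Comp C g f) (inv f) = Comp C g (Comp C f (inv f))"
    using a by (intro assoc[symmetric]) auto
  also have "\<dots> = Comp C g (Id C (Dom C g))" using a by (simp only: inv_r)
  also have "\<dots> = g" using a by (intro comp_idr') auto
  finally show ?thesis .
qed
lemma H3: "g \<in> Arr C \<Longrightarrow> h \<in> Arr C \<Longrightarrow> Dom C h = Dom C g \<Longrightarrow> Comp C (Comp C h (inv g)) g = h"
proof -
  assume a: "g \<in> Arr C" "h \<in> Arr C" "Dom C h = Dom C g"
  have "Comp C (Comp C h (inv g)) g = Comp C h (Comp C (inv g) g)"
    using a by (intro assoc[symmetric]) auto
  also have "\<dots> = Comp C h (Id C (Dom C h))" using a by (simp only: inv_l)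
  also have "\<dots> = h" using a by (intro comp_idr') auto
  finally show ?thesis .
qed
lemma H4: "g \<in> Arr C \<Longrightarrow> h \<in> Arr C \<Longrightarrow> Cod C h = Cod C g \<Longrightarrow> Comp C g (Comp C (inv g) h) = h"
proof -
  assume a: "g \<in> Arr C" "h \<in> Arr C" "Cod C h = Cod C g"
  have "Comp C g (Comp C (inv g) h) = Comp C (Comp C g (inv g)) h"
    using a by (intro assoc) auto
  also have "\<dots> = Comp C (Id C (Cod C h)) h" using a by (simp only: inv_r)
  also have "\<dots> = h" using a by (intro comp_idl') auto
  finally show ?thesis .
qed

lemma inv_uniq_l: "f \<in> Arr C \<Longrightarrow> g \<in> Arr C \<Longrightarrow> Dom C g = Cod C f \<Longrightarrow> Comp C g f = Id C (Dom C f) \<Longrightarrow> g = inv f"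
proof -
  assume a: "f \<in> Arr C" "g \<in> Arr C" "Dom C g = Cod C f" "Comp C g f = Id C (Dom C f)"
  have "g = Comp C (Comp C g f) (inv f)" using a(1-3) by (intro H2[symmetric]) auto
  also have "\<dots> = Comp C (Id C (Dom C f)) (inv f)" using a by (simp only:)
  also have "\<dots> = inv f" using a(1) by (intro comp_idl') auto
  finally show ?thesis .
qed

lemma inv_comp: "f \<in> Arr C \<Longrightarrow> g \<in> Arr C \<Longrightarrow> Cod C f = Dom C g \<Longrightarrow>
    inv (Comp C g f) = Comp C (inv f) (inv g)"
proof -
  assume a: "f \<in> Arr C" "g \<in> Arr C" "Cod C f = Dom C g"
  have "Comp C (Comp C (inv f) (inv g)) (Comp C g f) = Comp C (inv f) (Comp C (inv g) (Comp C g f))"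
    using a by (intro assoc[symmetric]) auto
  also have "\<dots> = Comp C (inv f) f" using a H1[of f g] by (simp only:)
  also have "\<dots> = Id C (Dom C (Comp C g f))" using a by simp
  finally show ?thesis using a by (intro inv_uniq_l[symmetric]) auto
qed

lemma cancel_r: "f \<in> Arr C \<Longrightarrow> A \<in> Arr C \<Longrightarrow> A' \<in> Arr C \<Longrightarrow> Dom C A = Cod C f \<Longrightarrow> Dom C A' = Cod C f
   \<Longrightarrow> Comp C A f = Comp C A' f \<Longrightarrow> A = A'"
  using H2[of f A] H2[of f A'] by metis
lemma cancel_l: "g \<in> Arr C \<Longrightarrow> A \<in> Arr C \<Longrightarrow> A' \<in> Arr C \<Longrightarrow> Cod C A = Dom C g \<Longrightarrow> Cod C A' = Dom C g
   \<Longrightarrow> Comp C g A = Comp C g A' \<Longrightarrow> A = A'"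
  using H1[of A g] H1[of A' g] by metis

definition Eg where
  "Eg x u v = (if u \<le> v then E x u v else inv (E x v u))"

lemma Eg_arr: "x \<in> S m \<Longrightarrow> u \<le> m \<Longrightarrow> v \<le> m \<Longrightarrow>
   Eg x u v \<in> Arr C \<and> Dom C (Eg x u v) = ob x u \<and> Cod C (Eg x u v) = ob x v"
  using E_arr[of x m u v] E_arr[of x m v u] by (auto simp: Eg_def)

lemma Eg_trans:
  assumes x: "x \<in> S m" and uvw: "u \<le> m" "v \<le> m" "w \<le> m"
  shows "Comp C (Eg x v w) (Eg x u v) = Eg x u w"
proof -
  note ea = E_arr[OF x]
  note et = E_trans[OF x]
  consider "u \<le> v" "v \<le> w" | "u \<le> v" "w < v" "u \<le> w" | "u \<le> v" "w < v" "w < u"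
    | "v < u" "v \<le> w" "u \<le> w" | "v < u" "v \<le> w" "w < u" | "v < u" "w < v" by linarith
  then show ?thesis
  proof cases
    case 1
    then have e: "Eg x v w = E x v w" "Eg x u v = E x u v" "Eg x u w = E x u w" by (auto simp: Eg_def)
    show ?thesis unfolding e using et[of u v w] 1 uvw by simp
  next
    case 2
    then have e: "Eg x v w = inv (E x w v)" "Eg x u v = E x u v" "Eg x u w = E x u w" by (auto simp: Eg_def)
    have q: "E x u v = Comp C (E x w v) (E x u w)" using et[of u w v] 2 uvw by simp
    show ?thesis unfolding e q using H1[of "E x u w" "E x w v"] ea[of u w] ea[of w v] 2 uvw by simp
  next
    case 3
    then have e: "Eg x v w = inv (E x w v)" "Eg x u v = E x u v" "Eg x u w = inv (E x w u)" by (auto simp: Eg_def)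
    have q: "E x w v = Comp C (E x u v) (E x w u)" using et[of w u v] 3 uvw by simp
    have i: "inv (E x w v) = Comp C (inv (E x w u)) (inv (E x u v))"
      unfolding q using inv_comp[of "E x w u" "E x u v"] ea[of u v] ea[of w u] 3 uvw by simp
    show ?thesis unfolding e i using H3[of "E x u v" "inv (E x w u)"] ea[of u v] ea[of w u] 3 uvw by simp
  next
    case 4
    then have e: "Eg x v w = E x v w" "Eg x u v = inv (E x v u)" "Eg x u w = E x u w" by (auto simp: Eg_def)
    have q: "E x v w = Comp C (E x u w) (E x v u)" using et[of v u w] 4 uvw by simp
    show ?thesis unfolding e q using H2[of "E x v u" "E x u w"] ea[of u w] ea[of v u] 4 uvw by simp
  next
    case 5
    then have e: "Eg x v w = E x v w" "Eg x u v = inv (E x v u)" "Eg x u w = inv (E x w u)" by (auto simp: Eg_def)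
    have q: "E x v u = Comp C (E x w u) (E x v w)" using et[of v w u] 5 uvw by simp
    have i: "inv (E x v u) = Comp C (inv (E x v w)) (inv (E x w u))"
      unfolding q using inv_comp[of "E x v w" "E x w u"] ea[of v w] ea[of w u] 5 uvw by simp
    show ?thesis unfolding e i using H4[of "E x v w" "inv (E x w u)"] ea[of v w] ea[of w u] 5 uvw by simp
  next
    case 6
    then have e: "Eg x v w = inv (E x w v)" "Eg x u v = inv (E x v u)" "Eg x u w = inv (E x w u)" by (auto simp: Eg_def)
    have q: "E x w u = Comp C (E x v u) (E x w v)" using et[of w v u] 6 uvw by simp
    show ?thesis unfolding e q using inv_comp[of "E x w v" "E x v u"] ea[of w v] ea[of v u] 6 uvw by simp
  qed
qed

lemma Eg_refl: "Eg x u u = Id C (ob x u)" by (simp add: Eg_def E_refl)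

lemma Eg_shift:
  assumes x: "x \<in> S m" and r: "r \<le> m" "a \<le> m" "b \<le> m"
  shows "Comp C (Eg x r b) (inv (Eg x r a)) = Eg x a b"
proof -
  have q: "Eg x r b = Comp C (Eg x a b) (Eg x r a)" using Eg_trans[OF x, of r a b] r by simp
  show ?thesis unfolding q using H2[of "Eg x r a" "Eg x a b"] Eg_arr[OF x, of r a] Eg_arr[OF x, of a b] r
    by simp
qed

lemma Eg_face:
  assumes x: "x \<in> S n" and n: "1 \<le> n" and i: "i \<le> n" and uv: "u \<le> n - 1" "v \<le> n - 1"
  shows "Eg (d i x) u v = Eg x (dl i u) (dl i v)"
proof (cases "u \<le> v")
  case True
  then have "dl i u \<le> dl i v" by (rule dl_mono)
  then show ?thesis using face_E[OF x n i, of u v] uv True by (simp add: Eg_def)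
next
  case False
  then have "\<not> dl i u \<le> dl i v" by (auto simp: dl_def)
  then show ?thesis using face_E[OF x n i, of v u] uv False by (simp add: Eg_def)
qed

definition mkx where
  "mkx H n = (Cod C (H 0), map (\<lambda>j. Comp C (H (Suc j)) (inv (H j))) [0..<n])"

lemma mkx:
  assumes H: "\<And>v. v \<le> n \<Longrightarrow> H v \<in> Arr C \<and> Dom C (H v) = c"
  shows "mkx H n \<in> S n"
    and "\<And>u v. u \<le> v \<Longrightarrow> v \<le> n \<Longrightarrow> E (mkx H n) u v = Comp C (H v) (inv (H u))"
    and "\<And>u. u \<le> n \<Longrightarrow> ob (mkx H n) u = Cod C (H u)"
proof -
  let ?G = "\<lambda>u v. Comp C (H v) (inv (H u))"
  let ?o = "\<lambda>v. Cod C (H v)"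
  have ob: "\<And>u. u \<le> n \<Longrightarrow> ?o u \<in> Obj C" using H by simp
  have ar: "\<And>u v. u \<le> n \<Longrightarrow> v \<le> n \<Longrightarrow> ?G u v \<in> Arr C \<and> Dom C (?G u v) = ?o u \<and> Cod C (?G u v) = ?o v"
    using H by simp
  have rf: "\<And>u. u \<le> n \<Longrightarrow> ?G u u = Id C (?o u)" using H by simp
  have tr: "\<And>u v w. u \<le> n \<Longrightarrow> v \<le> n \<Longrightarrow> w \<le> n \<Longrightarrow> Comp C (?G v w) (?G u v) = ?G u w"
  proof -
    fix u v w assume uvw: "u \<le> n" "v \<le> n" "w \<le> n"
    have "Comp C (?G v w) (?G u v) = Comp C (Comp C (?G v w) (H v)) (inv (H u))"
      using H uvw by (intro assoc) auto
    also have "Comp C (?G v w) (H v) = H w" using H3[of "H v" "H w"] H uvw by simp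
    finally show "Comp C (?G v w) (?G u v) = ?G u w" .
  qed
  have eq: "mkx H n = (?o 0, map (\<lambda>j. ?G j (Suc j)) [0..<n])" by (simp add: mkx_def)
  show xS: "mkx H n \<in> S n" unfolding eq by (rule construct(1)[OF ob ar rf tr])
  show E: "\<And>u v. u \<le> v \<Longrightarrow> v \<le> n \<Longrightarrow> E (mkx H n) u v = ?G u v"
    unfolding eq by (rule construct(2)[OF ob ar rf tr])
  show "\<And>u. u \<le> n \<Longrightarrow> ob (mkx H n) u = Cod C (H u)"
  proof -
    fix u assume u: "u \<le> n"
    have "ob (mkx H n) u = Cod C (E (mkx H n) 0 u)" using E_arr[OF xS, of 0 u] u by simp
    also have "\<dots> = Cod C (H u)" using E[of 0 u] u H by simp
    finally show "ob (mkx H n) u = Cod C (H u)" .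
  qed
qed

lemma sg_dl[simp]: "sg i (dl i u) = u" by (auto simp: sg_def dl_def)
lemma dl_neq[simp]: "dl i u \<noteq> i" by (auto simp: dl_def)
lemma dl_sg: "v \<noteq> i \<Longrightarrow> dl i (sg i v) = v" by (auto simp: sg_def dl_def)
lemma sg_le: "v \<le> n \<Longrightarrow> v \<noteq> i \<Longrightarrow> i \<le> n \<Longrightarrow> sg i v \<le> n - 1" by (auto simp: sg_def)

lemma face_match:
  assumes H: "\<And>v. v \<le> n \<Longrightarrow> H v \<in> Arr C \<and> Dom C (H v) = c"
    and n: "1 \<le> n" and i: "i \<le> n" and y: "y \<in> S (n - 1)" and r: "r \<le> n" "r \<noteq> i"
    and Hy: "\<And>v. v \<le> n \<Longrightarrow> v \<noteq> i \<Longrightarrow> H v = Eg y (sg i r) (sg i v)"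
  shows "d i (mkx H n) = y"
proof -
  note xS = mkx(1)[where H=H and n=n and c=c, OF H]
  have dS: "d i (mkx H n) \<in> S (n - 1)" by (rule face_S[OF xS n i])
  have r': "sg i r \<le> n - 1" using sg_le r i by simp
  show ?thesis
  proof (rule S_ext[OF dS y])
    have "ob (d i (mkx H n)) 0 = ob (mkx H n) (dl i 0)" using face_ob[OF xS n i, of 0] by simp
    also have "\<dots> = Cod C (H (dl i 0))" using mkx(3)[where H=H and n=n and c=c, OF H, of "dl i 0"] dl_le[of 0 n i] n by simp
    also have "\<dots> = Cod C (Eg y (sg i r) 0)" using Hy[of "dl i 0"] dl_le[of 0 n i] n by simp
    also have "\<dots> = ob y 0" using Eg_arr[OF y r', of 0] by simp
    finally show "ob (d i (mkx H n)) 0 = ob y 0" .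
    fix j assume j: "j < n - 1"
    have le: "dl i j \<le> dl i (Suc j)" "dl i (Suc j) \<le> n" "dl i j \<le> n"
      using dl_mono[of j "Suc j" i] dl_le[of "Suc j" n i] dl_le[of j n i] j by auto
    have "E (d i (mkx H n)) j (Suc j) = E (mkx H n) (dl i j) (dl i (Suc j))"
      using face_E[OF xS n i, of j "Suc j"] j by simp
    also have "\<dots> = Comp C (H (dl i (Suc j))) (inv (H (dl i j)))" using mkx(2)[where H=H and n=n and c=c, OF H] le by simp
    also have "\<dots> = Comp C (Eg y (sg i r) (Suc j)) (inv (Eg y (sg i r) j))"
      using Hy[of "dl i j"] Hy[of "dl i (Suc j)"] le by simp
    also have "\<dots> = Eg y j (Suc j)" using Eg_shift[OF y r', of j "Suc j"] j by simp
    also have "\<dots> = E y j (Suc j)" by (simp add: Eg_def)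
    finally show "E (d i (mkx H n)) j (Suc j) = E y j (Suc j)" .
  qed
qed

lemma SS_fill:
  assumes n: "1 < n" and pq: "p < q" "q \<le> n" and cp: "cp \<in> S (n - 1)" and cq: "cq \<in> S (n - 1)"
    and cm: "d p cq = d (q - 1) cp"
  shows "\<exists>x\<in>S n. d p x = cp \<and> d q x = cq"
proof -
  have n1: "1 \<le> n - 1" using n by simp
  have common: "Eg cq (sg q u) (sg q v) = Eg cp (sg p u) (sg p v)"
    if uv: "u \<le> n" "v \<le> n" "u \<noteq> p" "u \<noteq> q" "v \<noteq> p" "v \<noteq> q" for u v
  proof -
    have ar: "sg q u \<noteq> p" "sg q v \<noteq> p" "dl (q - 1) (sg p (sg q u)) = sg p u"
      "dl (q - 1) (sg p (sg q v)) = sg p v" "sg p (sg q u) \<le> n - 1 - 1" "sg p (sg q v) \<le> n - 1 - 1"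
      using uv pq by (auto simp: sg_def dl_def)
    have "Eg (d p cq) (sg p (sg q u)) (sg p (sg q v)) = Eg cq (sg q u) (sg q v)"
      using Eg_face[OF cq n1, of p "sg p (sg q u)" "sg p (sg q v)"] ar pq dl_sg by simp
    moreover have "Eg (d (q - 1) cp) (sg p (sg q u)) (sg p (sg q v)) = Eg cp (sg p u) (sg p v)"
      using Eg_face[OF cp n1, of "q - 1" "sg p (sg q u)" "sg p (sg q v)"] ar pq by simp
    ultimately show ?thesis using cm by simp
  qed
  define r where "r = (if 0 < p then 0 else if 1 < q then 1 else (2::nat))"
  have r: "r \<le> n" "r \<noteq> p" "r \<noteq> q" using pq n by (auto simp: r_def)
  define H where "H v = (if v \<noteq> p then Eg cp (sg p r) (sg p v) else Eg cq (sg q r) (sg q p))" for v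
  have rp: "sg p r \<le> n - 1" "sg q r \<le> n - 1" using r pq sg_le by auto
  have obr: "ob cq (sg q r) = ob cp (sg p r)"
    using common[of r r] r Eg_arr[OF cq, of "sg q r" "sg q r"] Eg_arr[OF cp, of "sg p r" "sg p r"] rp by metis
  have H: "H v \<in> Arr C \<and> Dom C (H v) = ob cp (sg p r)" if v: "v \<le> n" for v
  proof (cases "v = p")
    case True
    then show ?thesis using Eg_arr[OF cq, of "sg q r" "sg q p"] rp sg_le[of p n q] pq obr
      by (simp add: H_def)
  next
    case False
    then show ?thesis using Eg_arr[OF cp, of "sg p r" "sg p v"] rp sg_le[of v n p] pq v
      by (simp add: H_def)
  qed
  have x: "mkx H n \<in> S n" by (rule mkx(1)[where H=H and n=n and c="ob cp (sg p r)", OF H])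
  have "d p (mkx H n) = cp"
    by (rule face_match[where c="ob cp (sg p r)", OF H _ _ cp r(1) r(2)]) (use n pq in \<open>auto simp: H_def\<close>)
  moreover have "d q (mkx H n) = cq"
  proof (rule face_match[where c="ob cp (sg p r)", OF H _ _ cq r(1) r(3)])
    show "1 \<le> n" "q \<le> n" using n pq by auto
    fix v assume v: "v \<le> n" "v \<noteq> q"
    show "H v = Eg cq (sg q r) (sg q v)"
    proof (cases "v = p")
      case True then show ?thesis by (simp add: H_def)
    next
      case False then show ?thesis using common[of r v] r v by (simp add: H_def)
    qed
  qed
  ultimately show ?thesis using x by blast
qed

lemma face_eq_E:
  assumes z: "z \<in> S m" and z': "z' \<in> S m" and m: "1 \<le> m" and i: "i \<le> m" and e: "d i z = d i z'"
    and uv: "u \<le> v" "v \<le> m" "u \<noteq> i" "v \<noteq> i"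
  shows "E z u v = E z' u v"
proof -
  have a: "sg i u \<le> sg i v" "sg i v \<le> m - 1" using uv i by (auto simp: sg_def)
  have "E z u v = E (d i z) (sg i u) (sg i v)" using face_E[OF z m i, of "sg i u" "sg i v"] a uv dl_sg by simp
  also have "\<dots> = E z' u v" using face_E[OF z' m i, of "sg i u" "sg i v"] a uv dl_sg e by simp
  finally show ?thesis .
qed

lemma two_faces:
  assumes z: "z \<in> S m" and z': "z' \<in> S m" and m: "2 \<le> m" and st: "s < t" "t \<le> m"
    and es: "d s z = d s z'" and et: "d t z = d t z'"
  shows "z = z'"
proof (rule S_ext[OF z z'])
  have m1: "1 \<le> m" using m by simp
  have "dl t 0 = 0" using st by (simp add: dl_def)
  then show "ob z 0 = ob z' 0" using face_ob[OF z m1, of t 0] face_ob[OF z' m1, of t 0] st et by simp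
  fix j assume j: "j < m"
  note fs = face_eq_E[OF z z' m1, of s] and ft = face_eq_E[OF z z' m1, of t]
  consider "j \<noteq> s" "Suc j \<noteq> s" | "j \<noteq> t" "Suc j \<noteq> t" | "j = s" "t = Suc s" "0 < s" | "j = 0" "s = 0" "t = 1"
    using st by linarith
  then show "E z j (Suc j) = E z' j (Suc j)"
  proof cases
    case 1 then show ?thesis using fs es st j by simp
  next
    case 2 then show ?thesis using ft et st j by simp
  next
    case 3
    have a: "E z (s - 1) (Suc s) = E z' (s - 1) (Suc s)" using fs[of "s - 1" "Suc s"] es 3 st j by simp
    have b: "E z (s - 1) s = E z' (s - 1) s" using ft[of "s - 1" s] et 3 st j by simp
    have c: "E z (s - 1) (Suc s) = Comp C (E z s (Suc s)) (E z (s - 1) s)" using E_trans[OF z, of "s - 1" s "Suc s"] 3 j by simp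
    have c': "E z' (s - 1) (Suc s) = Comp C (E z' s (Suc s)) (E z' (s - 1) s)" using E_trans[OF z', of "s - 1" s "Suc s"] 3 j by simp
    have eq: "Comp C (E z s (Suc s)) (E z (s - 1) s) = Comp C (E z' s (Suc s)) (E z (s - 1) s)"
      using a b c c' by (simp only:)
    have ar: "E z (s - 1) s \<in> Arr C" "E z s (Suc s) \<in> Arr C" "E z' s (Suc s) \<in> Arr C"
      "Dom C (E z s (Suc s)) = Cod C (E z (s - 1) s)" "Dom C (E z' s (Suc s)) = Cod C (E z (s - 1) s)"
      using E_arr[OF z, of "s - 1" s] E_arr[OF z, of s "Suc s"] E_arr[OF z', of "s - 1" s] E_arr[OF z', of s "Suc s"] 3 j b
      by auto
    show ?thesis using cancel_r[OF ar eq] 3 by simp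
  next
    case 4
    have a: "E z 0 2 = E z' 0 2" using ft[of 0 2] et 4 m by simp
    have b: "E z 1 2 = E z' 1 2" using fs[of 1 2] es 4 m by simp
    have c: "E z 0 2 = Comp C (E z 1 2) (E z 0 1)" using E_trans[OF z, of 0 1 2] m by simp
    have c': "E z' 0 2 = Comp C (E z' 1 2) (E z' 0 1)" using E_trans[OF z', of 0 1 2] m by simp
    have eq: "Comp C (E z 1 2) (E z 0 1) = Comp C (E z 1 2) (E z' 0 1)"
      using a b c c' by (simp only:)
    have ar: "E z 1 2 \<in> Arr C" "E z 0 1 \<in> Arr C" "E z' 0 1 \<in> Arr C"
      "Cod C (E z 0 1) = Dom C (E z 1 2)" "Cod C (E z' 0 1) = Dom C (E z 1 2)"
      using E_arr[OF z, of 0 1] E_arr[OF z, of 1 2] E_arr[OF z', of 0 1] E_arr[OF z', of 1 2] m b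
      by auto
    show ?thesis using cancel_l[OF ar eq] 4 by simp
  qed
qed

lemma face_commute:
  assumes x: "x \<in> S n" and n: "2 \<le> n" and ij: "i \<noteq> j" "i \<le> n" "j \<le> n"
  shows "d (sg i j) (d i x) = d (sg j i) (d j x)"
proof (cases "j < i")
  case True then show ?thesis using simp_id[OF x n, of j i] ij by (simp add: sg_def)
next
  case False then show ?thesis using simp_id[OF x n, of i j] ij by (simp add: sg_def)
qed

lemma Kan_fill:
  assumes n: "1 \<le> n" and k: "k \<le> n"
    and yS: "\<forall>i\<le>n. i \<noteq> k \<longrightarrow> y i \<in> S (n - 1)"
    and cm: "\<forall>i j. i < j \<and> j \<le> n \<and> i \<noteq> k \<and> j \<noteq> k \<longrightarrow> d i (y j) = d (j - 1) (y i)"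
  shows "\<exists>x\<in>S n. \<forall>i\<le>n. i \<noteq> k \<longrightarrow> d i x = y i"
proof (cases "n = 1")
  case True
  then show ?thesis using kan1 k yS by blast
next
  case False
  then have n2: "2 \<le> n" using n by simp
  define p where "p = (if k = 0 then 1 else (0::nat))"
  define q where "q = (if k \<le> 1 then 2 else (1::nat))"
  have pq: "p < q" "q \<le> n" "p \<noteq> k" "q \<noteq> k" using n2 by (auto simp: p_def q_def)
  have "\<exists>x\<in>S n. d p x = y p \<and> d q x = y q"
    by (rule SS_fill) (use n2 pq yS cm in auto)
  then obtain x where x: "x \<in> S n" "d p x = y p" "d q x = y q" by blast
  have "d i x = y i" if i: "i \<le> n" "i \<noteq> k" for i
  proof (cases "i = p \<or> i = q")
    case True then show ?thesis using x by auto
  next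
    case False
    have n3: "2 \<le> n - 1" using False i pq n2 k by (auto simp: p_def q_def split: if_splits)
    have dS: "d i x \<in> S (n - 1)" using face_S[OF x(1)] n i by simp
    have yi: "y i \<in> S (n - 1)" using yS i by simp
    have cmg: "d (sg j i) (y j) = d (sg i j) (y i)" if j: "j \<le> n" "j \<noteq> k" "j \<noteq> i" for j
    proof (cases "j < i")
      case True then show ?thesis using cm j i by (simp add: sg_def)
    next
      case False then show ?thesis using cm[rule_format, of i j] j i by (simp add: sg_def)
    qed
    have fj: "d (sg i j) (d i x) = d (sg i j) (y i)" if j: "j \<le> n" "j \<noteq> k" "j \<noteq> i" "d j x = y j" for j
      using face_commute[OF x(1) n2, of i j] cmg[OF j(1-3)] j i by simp
    show ?thesis
    proof (rule two_faces[OF dS yi n3])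
      show "sg i p < sg i q" "sg i q \<le> n - 1" using pq False i by (auto simp: sg_def)
      show "d (sg i p) (d i x) = d (sg i p) (y i)" using fj[of p] pq False x by auto
      show "d (sg i q) (d i x) = d (sg i q) (y i)" using fj[of q] pq False x by auto
    qed
  qed
  then show ?thesis using x by blast
qed

lemma grpd_SS: "SS_complex S d"
  unfolding SS_complex_def using SS_fill by auto

lemma grpd_Kan: "Kan_complex S d"
  unfolding Kan_complex_def using Kan_fill by blast

end

theorem mainTheorem5:
  fixes C :: "('o, 'm) category"
  assumes "is_category C"
  shows "SS_complex (nerve_simplices C) (nerve_face C) \<longleftrightarrow>
         Kan_complex (nerve_simplices C) (nerve_face C)"
proof -
  interpret cat C using assms by (unfold_locales)
  show ?thesis
  proof
    assume ss: "SS_complex (nerve_simplices C) (nerve_face C)"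
    interpret grpd C using SS_grp[OF ss] by unfold_locales
    show "Kan_complex (nerve_simplices C) (nerve_face C)" by (rule grpd_Kan)
  next
    assume kan: "Kan_complex (nerve_simplices C) (nerve_face C)"
    interpret grpd C using Kan_grp[OF kan] by unfold_locales
    show "SS_complex (nerve_simplices C) (nerve_face C)" by (rule grpd_SS)
  qed
qed

end
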